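(* Let $\Bbbk$ be an algebraically closed field of characteristic $0$, let $P=\Bbbk[x_1,x_2,x_3]$ be a quadratic Poisson algebra, and let $Q=\Bbbk[y_1,y_2,y_3]$ be a Poisson algebra such that: (1) there are distinct $i,j\in\{1,2,3\}$ with $\{y_i,y_j\}=f(y_1,y_2)-r y_3$, where $f\in\Bbbk[y_1,y_2]$ is homogeneous with respect to the grading $\deg y_1=\deg y_2=1$ and $r\in\Bbbk^\times$; (2) for the remaining unordered pairs $\{k,l\}\neq\{i,j\}$ of distinct indices in $\{1,2,3\}$, the bracket $\{y_k,y_l\}$ is a scalar multiple (possibly zero) of a single monomial in $y_1,y_2,y_3$. Then $P$ is not isomorphic to $Q$ as Poisson algebras.
   Context: $P$ has the standard grading and is quadratic: $\{P_1,P_1\}\subseteq P_2$. A Poisson isomorphism is an algebra isomorphism that is also a Lie algebra isomorphism. *)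

theory Defs
  imports "HOL-Library.Poly_Mapping" "HOL-Computational_Algebra.Polynomial"
begin

datatype var3 = V1 | V2 | V3

text \<open>The polynomial ring k[x1,x2,x3]: finitely supported maps from monomials
  (exponent vectors) to coefficients; multiplication is convolution.\<close>
type_synonym 'k mpoly3 = "(var3 \<Rightarrow>\<^sub>0 nat) \<Rightarrow>\<^sub>0 'k"

definition algebraically_closed :: "'k::field itself \<Rightarrow> bool" where
  "algebraically_closed _ \<longleftrightarrow>
     (\<forall>p :: 'k poly. Polynomial.degree p > 0 \<longrightarrow> (\<exists>x. poly p x = 0))"

definition mvar :: "var3 \<Rightarrow> 'k::comm_ring_1 mpoly3" where
  "mvar i = Poly_Mapping.single (Poly_Mapping.single i 1) 1"

definition mconst :: "'k::comm_ring_1 \<Rightarrow> 'k mpoly3" where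
  "mconst c = Poly_Mapping.single 0 c"

definition mmonomial :: "(var3 \<Rightarrow>\<^sub>0 nat) \<Rightarrow> 'k::comm_ring_1 mpoly3" where
  "mmonomial m = Poly_Mapping.single m 1"

definition mdeg :: "(var3 \<Rightarrow>\<^sub>0 nat) \<Rightarrow> nat" where
  "mdeg m = Poly_Mapping.lookup m V1 + Poly_Mapping.lookup m V2 + Poly_Mapping.lookup m V3"

definition homogeneous :: "nat \<Rightarrow> 'k::comm_ring_1 mpoly3 \<Rightarrow> bool" where
  "homogeneous d p \<longleftrightarrow> (\<forall>m \<in> Poly_Mapping.keys p. mdeg m = d)"

definition in_k_y1y2 :: "'k::comm_ring_1 mpoly3 \<Rightarrow> bool" where
  "in_k_y1y2 p \<longleftrightarrow> (\<forall>m \<in> Poly_Mapping.keys p. Poly_Mapping.lookup m V3 = 0)"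

definition poisson_bracket :: "('k::comm_ring_1 mpoly3 \<Rightarrow> 'k mpoly3 \<Rightarrow> 'k mpoly3) \<Rightarrow> bool" where
  "poisson_bracket B \<longleftrightarrow>
     (\<forall>a b c. B (a + b) c = B a c + B b c) \<and>
     (\<forall>a b c. B a (b + c) = B a b + B a c) \<and>
     (\<forall>s a b. B (mconst s * a) b = mconst s * B a b) \<and>
     (\<forall>s a b. B a (mconst s * b) = mconst s * B a b) \<and>
     (\<forall>a b. B a b = - B b a) \<and>
     (\<forall>a b c. B a (B b c) + B b (B c a) + B c (B a b) = 0) \<and>
     (\<forall>a b c. B a (b * c) = B a b * c + b * B a c)"

definition quadratic_poisson :: "('k::comm_ring_1 mpoly3 \<Rightarrow> 'k mpoly3 \<Rightarrow> 'k mpoly3) \<Rightarrow> bool" where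
  "quadratic_poisson B \<longleftrightarrow> (\<forall>i j. homogeneous 2 (B (mvar i) (mvar j)))"

definition poisson_iso ::
  "('k::comm_ring_1 mpoly3 \<Rightarrow> 'k mpoly3 \<Rightarrow> 'k mpoly3) \<Rightarrow> ('k mpoly3 \<Rightarrow> 'k mpoly3 \<Rightarrow> 'k mpoly3)
   \<Rightarrow> ('k mpoly3 \<Rightarrow> 'k mpoly3) \<Rightarrow> bool" where
  "poisson_iso BP BQ \<phi> \<longleftrightarrow>
     bij \<phi> \<and>
     (\<forall>a b. \<phi> (a + b) = \<phi> a + \<phi> b) \<and>
     (\<forall>s a. \<phi> (mconst s * a) = mconst s * \<phi> a) \<and>
     (\<forall>a b. \<phi> (a * b) = \<phi> a * \<phi> b) \<and>
     \<phi> 1 = 1 \<and>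
     (\<forall>a b. \<phi> (BP a b) = BQ (\<phi> a) (\<phi> b))"

end

theory Submission imports Defs begin

abbreviation ev :: "var3 \<Rightarrow> (var3 \<Rightarrow>\<^sub>0 nat)" where "ev v \<equiv> Poly_Mapping.single v 1"

lemma lookup_mconst_mult: "Poly_Mapping.lookup (mconst c * b) m = c * Poly_Mapping.lookup b m"
proof -
  have "mconst c * b = Poly_Mapping.map ((*) c) b"
    by (simp add: mconst_def mult_map_scale_conv_mult)
  then show ?thesis by (simp add: map.rep_eq when_def)
qed

lemma lookup_mconst: "Poly_Mapping.lookup (mconst c) m = (if m = 0 then c else 0)"
  by (simp add: mconst_def lookup_single when_def)

lemma mconst_one[simp]: "mconst 1 = 1" by (simp add: mconst_def)

lemma update_eq_add: "a \<notin> Poly_Mapping.keys f \<Longrightarrow> Poly_Mapping.update a b f = f + Poly_Mapping.single a b"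
  by (rule poly_mapping_eqI) (auto simp: lookup_update lookup_add lookup_single when_def in_keys_iff)

lemma mvar_mult_single: "mvar v * Poly_Mapping.single k c = Poly_Mapping.single (ev v + k) c"
  by (simp add: mvar_def mult_single)

lemma ev_minus: "(ev v + k) - ev v = k"
  by simp

lemma ev_plus_minus: "Poly_Mapping.lookup m v > 0 \<Longrightarrow> ev v + (m - ev v) = m"
  by (rule poly_mapping_eqI) (auto simp: lookup_add lookup_minus lookup_single when_def)

lemma lookup_mvar_mult:
  "Poly_Mapping.lookup (mvar v * g) m = (if Poly_Mapping.lookup m v > 0 then Poly_Mapping.lookup g (m - ev v) else 0)"
proof (induction g rule: update_induct)
  case const
  then show ?case by simp
next
  case (update f a b)
  have "Poly_Mapping.lookup (mvar v * Poly_Mapping.single a b) m = (if Poly_Mapping.lookup m v > 0 then Poly_Mapping.lookup (Poly_Mapping.single a b) (m - ev v) else 0)"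
  proof (cases "Poly_Mapping.lookup m v > 0")
    case True
    then show ?thesis using ev_plus_minus[OF True]
      by (auto simp: mvar_mult_single lookup_single when_def)
  next
    case False
    have "ev v + a \<noteq> m" using False by (auto simp: lookup_add)
    then show ?thesis using False
      by (auto simp: mvar_mult_single lookup_single when_def)
  qed
  then show ?case using update by (simp add: update_eq_add distrib_left lookup_add)
qed

lemma mpoly_induct[case_names add const mulvar]:
  fixes p :: "'k::comm_ring_1 mpoly3"
  assumes add: "\<And>a b. S a \<Longrightarrow> S b \<Longrightarrow> S (a + b)"
    and const: "\<And>c. S (mconst c)"
    and mulvar: "\<And>a v. S a \<Longrightarrow> S (a * mvar v)"
  shows "S p"
proof -
  have mono: "\<forall>c. S (Poly_Mapping.single m c)" for m
  proof (induction m rule: update_induct)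
    case const
    then show ?case using assms(2) by (simp add: mconst_def)
  next
    case (update f a b)
    have "\<forall>c. S (Poly_Mapping.single (f + Poly_Mapping.single a n) c)" for n
    proof (induction n)
      case 0
      then show ?case using update by simp
    next
      case (Suc n)
      show ?case
      proof
        fix c
        have "Poly_Mapping.single (f + Poly_Mapping.single a (Suc n)) (c::'k)
             = Poly_Mapping.single (f + Poly_Mapping.single a n) c * mvar a"
          by (simp add: mvar_def mult_single single_add[symmetric] add.assoc)
        then show "S (Poly_Mapping.single (f + Poly_Mapping.single a (Suc n)) c)"
          using Suc mulvar by simp
      qed
    qed
    then show ?case using update by (simp add: update_eq_add)
  qed
  show ?thesis
  proof (induction p rule: update_induct)
    case const
    then show ?case using assms(2)[of 0] by (simp add: mconst_def)
  next
    case (update f a b)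
    then show ?case using add mono by (simp add: update_eq_add)
  qed
qed

definition ev0 :: "'k::comm_ring_1 mpoly3 \<Rightarrow> 'k" where
  "ev0 p = Poly_Mapping.lookup p 0"

lemma ev0_add: "ev0 (a + b) = ev0 a + ev0 b" by (simp add: ev0_def lookup_add)
lemma ev0_mconst: "ev0 (mconst c) = c" by (simp add: ev0_def lookup_mconst)
lemma ev0_mconst_mult: "ev0 (mconst c * a) = c * ev0 a" by (simp add: ev0_def lookup_mconst_mult)
lemma ev0_mvar_mult: "ev0 (mvar v * a) = 0" by (simp add: ev0_def lookup_mvar_mult)
lemma ev0_mvar: "ev0 (mvar v) = 0" using ev0_mvar_mult[of v 1] by simp

lemma ev0_mult: "ev0 (a * b) = ev0 a * ev0 (b :: 'k::comm_ring_1 mpoly3)"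
proof (induction a rule: mpoly_induct)
  case (add a c)
  then show ?case by (simp add: distrib_right ev0_add)
next
  case (const c)
  then show ?case by (simp add: ev0_mconst_mult ev0_mconst)
next
  case (mulvar a v)
  have "ev0 (a * mvar v * b) = ev0 (mvar v * (a * b))" by (simp add: ac_simps)
  moreover have "ev0 (a * mvar v) = ev0 (mvar v * a)" by (simp add: ac_simps)
  ultimately show ?case by (simp add: ev0_mvar_mult)
qed

definition d3 :: "'k::comm_ring_1 mpoly3 \<Rightarrow> 'k mpoly3" where
  "d3 p = Abs_poly_mapping (\<lambda>m. of_nat (Poly_Mapping.lookup m V3 + 1) * Poly_Mapping.lookup p (m + ev V3))"

lemma lookup_d3: "Poly_Mapping.lookup (d3 p) m = of_nat (Poly_Mapping.lookup m V3 + 1) * Poly_Mapping.lookup p (m + ev V3)"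
proof -
  have "{m. of_nat (Poly_Mapping.lookup m V3 + 1) * Poly_Mapping.lookup p (m + ev V3) \<noteq> 0}
        \<subseteq> (\<lambda>k. k - ev V3) ` Poly_Mapping.keys p"
  proof
    fix m assume "m \<in> {m. of_nat (Poly_Mapping.lookup m V3 + 1) * Poly_Mapping.lookup p (m + ev V3) \<noteq> 0}"
    then have "m + ev V3 \<in> Poly_Mapping.keys p" by (auto simp: in_keys_iff)
    moreover have "m = (m + ev V3) - ev V3" by simp
    ultimately show "m \<in> (\<lambda>k. k - ev V3) ` Poly_Mapping.keys p" by blast
  qed
  then have "finite {m. of_nat (Poly_Mapping.lookup m V3 + 1) * Poly_Mapping.lookup p (m + ev V3) \<noteq> 0}"
    by (rule finite_subset) simp
  then show ?thesis by (simp add: d3_def)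
qed

lemma d3_add: "d3 (a + b) = d3 a + d3 b"
  by (rule poly_mapping_eqI) (simp add: lookup_d3 lookup_add distrib_left)

lemma d3_diff: "d3 (a - b) = d3 a - d3 b"
  by (rule poly_mapping_eqI) (simp add: lookup_d3 lookup_minus right_diff_distrib)

lemma d3_mconst_mult: "d3 (mconst c * b) = mconst c * d3 b"
  by (rule poly_mapping_eqI) (simp add: lookup_d3 lookup_mconst_mult mult.left_commute)

lemma plus_ev_nz: "k + Poly_Mapping.single v (Suc 0) \<noteq> 0"
proof
  assume "k + Poly_Mapping.single v (Suc 0) = 0"
  then have "Poly_Mapping.lookup (k + Poly_Mapping.single v (Suc 0)) v = 0" by simp
  then show False by (simp add: lookup_add)
qed

lemma d3_mconst: "d3 (mconst c) = 0"
  by (rule poly_mapping_eqI) (simp add: lookup_d3 lookup_mconst plus_ev_nz)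

lemma d3_mvar_mult: "d3 (mvar v * b) = mvar v * d3 b + (if v = V3 then b else 0)"
proof (rule poly_mapping_eqI)
  fix m
  show "Poly_Mapping.lookup (d3 (mvar v * b)) m = Poly_Mapping.lookup (mvar v * d3 b + (if v = V3 then b else 0)) m"
  proof (cases "v = V3")
    case True
    have e: "m + ev V3 - ev V3 = m" by simp
    have e2: "0 < Poly_Mapping.lookup m V3 \<Longrightarrow> m - ev V3 + ev V3 = m"
      using ev_plus_minus[of m V3] by (simp add: add.commute)
    have e3: "0 < Poly_Mapping.lookup m V3 \<Longrightarrow> Poly_Mapping.lookup (m - ev V3) V3 + 1 = Poly_Mapping.lookup m V3"
      by (simp add: lookup_minus)
    show ?thesis
    proof (cases "0 < Poly_Mapping.lookup m V3")
      case pos: True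
      have "Poly_Mapping.lookup (d3 (mvar v * b)) m = of_nat (Poly_Mapping.lookup m V3 + 1) * Poly_Mapping.lookup b m"
        using True by (simp add: lookup_d3 lookup_mvar_mult lookup_add e)
      also have "\<dots> = of_nat (Poly_Mapping.lookup m V3) * Poly_Mapping.lookup b m + Poly_Mapping.lookup b m"
        by (simp add: distrib_right)
      also have "\<dots> = of_nat (Poly_Mapping.lookup (m - ev V3) V3 + 1) * Poly_Mapping.lookup b (m - ev V3 + ev V3) + Poly_Mapping.lookup b m"
        unfolding e2[OF pos] e3[OF pos] ..
      also have "\<dots> = Poly_Mapping.lookup (mvar v * d3 b + (if v = V3 then b else 0)) m"
        using True pos unfolding lookup_add lookup_mvar_mult lookup_d3 by simp
      finally show ?thesis .
    next
      case z: False
      then show ?thesis using True by (simp add: lookup_d3 lookup_mvar_mult lookup_add e)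
    qed
  next
    case False
    have l: "Poly_Mapping.lookup (Poly_Mapping.single V3 (Suc 0)) v = 0"
      using False by (simp add: lookup_single when_def)
    have e: "m + Poly_Mapping.single V3 (Suc 0) - Poly_Mapping.single v (Suc 0) = m - Poly_Mapping.single v (Suc 0) + Poly_Mapping.single V3 (Suc 0)"
      using False by (intro poly_mapping_eqI) (auto simp: lookup_add lookup_minus lookup_single when_def)
    have l3: "Poly_Mapping.lookup (m - Poly_Mapping.single v (Suc 0)) V3 = Poly_Mapping.lookup m V3"
      using False by (simp add: lookup_minus lookup_single when_def)
    show ?thesis using False by (simp add: lookup_d3 lookup_mvar_mult lookup_add l e l3)
  qed
qed

lemma d3_leibniz: "d3 (a * b) = a * d3 b + b * d3 (a :: 'k::comm_ring_1 mpoly3)"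
proof (induction a arbitrary: b rule: mpoly_induct)
  case (add a c)
  then show ?case by (simp add: distrib_right distrib_left d3_add)
next
  case (const c)
  then show ?case by (simp add: d3_mconst_mult d3_mconst)
next
  case (mulvar a v)
  have "d3 (a * mvar v * b) = d3 (a * (mvar v * b))" by (simp add: ac_simps)
  also have "\<dots> = a * d3 (mvar v * b) + mvar v * b * d3 a" using mulvar by simp
  also have "\<dots> = a * (mvar v * d3 b + (if v = V3 then b else 0)) + mvar v * b * d3 a"
    by (simp add: d3_mvar_mult)
  finally have 1: "d3 (a * mvar v * b) = a * (mvar v * d3 b + (if v = V3 then b else 0)) + mvar v * b * d3 a" .
  have "d3 (a * mvar v) = d3 (mvar v * a)" by (simp add: ac_simps)
  also have "\<dots> = mvar v * d3 a + (if v = V3 then a else 0)" by (simp add: d3_mvar_mult)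
  finally have 2: "d3 (a * mvar v) = mvar v * d3 a + (if v = V3 then a else 0)" .
  show ?case unfolding 1 2 by (simp add: algebra_simps)
qed

lemma d3_y1y2: "in_k_y1y2 f \<Longrightarrow> d3 f = 0"
proof (rule poly_mapping_eqI)
  fix m assume "in_k_y1y2 f"
  then have "Poly_Mapping.lookup f (m + ev V3) = 0"
    unfolding in_k_y1y2_def by (metis in_keys_iff lookup_add lookup_single_eq add_is_0 one_neq_zero)
  then show "Poly_Mapping.lookup (d3 f) m = Poly_Mapping.lookup 0 m" by (simp add: lookup_d3)
qed

lemma d3_one: "d3 1 = 0" using d3_mconst[of 1] by simp

lemma d3_mvar3: "d3 (mvar V3) = 1"
  using d3_mvar_mult[of V3 1] by (simp add: d3_one)

definition L :: "(var3 \<Rightarrow> 'k::comm_ring_1 mpoly3) \<Rightarrow> 'k mpoly3" where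
  "L g = mvar V1 * g V1 + mvar V2 * g V2 + mvar V3 * g V3"

lemma L_add: "L g + L h = L (\<lambda>i. g i + h i)"
  by (simp add: L_def algebra_simps)

lemma L_mult: "L g * q = L (\<lambda>i. g i * q)"
  by (simp add: L_def algebra_simps)

lemma L_zero: "L (\<lambda>i. 0) = 0" by (simp add: L_def)

lemma lookup_L0: "Poly_Mapping.lookup (L g) 0 = 0"
  by (simp add: L_def lookup_add lookup_mvar_mult)

lemma lookup_mvar_mult_ev: "Poly_Mapping.lookup (mvar i * X) (ev k) = (if i = k then Poly_Mapping.lookup X 0 else 0)"
  by (simp add: lookup_mvar_mult lookup_single when_def)

lemma lookup_Lev: "Poly_Mapping.lookup (L g) (ev k) = Poly_Mapping.lookup (g k) 0"
  by (cases k) (simp_all only: L_def lookup_add lookup_mvar_mult_ev, simp_all)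

lemma decomp: "\<exists>c g. w = mconst c + L (g :: var3 \<Rightarrow> 'k::comm_ring_1 mpoly3)"
proof (induction w rule: mpoly_induct)
  case (add a b)
  then obtain c g c' g' where "a = mconst c + L g" "b = mconst c' + L g'" by blast
  then have "a + b = mconst (c + c') + L (\<lambda>i. g i + g' i)"
    by (simp add: L_add[symmetric] mconst_def single_add algebra_simps)
  then show ?case by blast
next
  case (const c)
  have "mconst c = mconst c + L (\<lambda>i. 0)" by (simp add: L_zero)
  then show ?case by blast
next
  case (mulvar a v)
  then obtain c g where a: "a = mconst c + L g" by blast
  have "a * mvar v = mconst 0 + L (\<lambda>i. g i * mvar v + (if i = v then mconst c else 0))"
    unfolding a by (cases v) (simp_all add: L_def mconst_def algebra_simps)
  then show ?case by blast
qed

definition M2 :: "'k::comm_ring_1 mpoly3 \<Rightarrow> bool" where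
  "M2 w \<longleftrightarrow> (\<exists>h. w = L (\<lambda>i. L (h i)))"

lemma M2_add: "M2 a \<Longrightarrow> M2 b \<Longrightarrow> M2 (a + b)"
  unfolding M2_def by (auto simp: L_add)

lemma M2_mult: "M2 a \<Longrightarrow> M2 (a * q)"
  unfolding M2_def by (auto simp: L_mult)

lemma M2_mult2: "M2 a \<Longrightarrow> M2 (q * a)"
  using M2_mult by (metis mult.commute)

lemma M2_zero: "M2 0"
  unfolding M2_def by (rule exI[of _ "\<lambda>i j. 0"]) (simp add: L_zero)

lemma M2_uminus: "M2 a \<Longrightarrow> M2 (- a)"
  using M2_mult[of a "-1"] by simp

lemma mdeg_0: "mdeg 0 = 0" by (simp add: mdeg_def)
lemma mdeg_ev: "mdeg (ev k) = 1" by (cases k) (simp_all add: mdeg_def lookup_single when_def)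

lemma ev_nz: "Poly_Mapping.single k (Suc 0) \<noteq> 0"
  using plus_ev_nz[of 0 k] by simp

lemma hom2_M2:
  assumes "homogeneous 2 (w :: 'k::comm_ring_1 mpoly3)"
  shows "M2 w"
proof -
  obtain c g where w: "w = mconst c + L g" using decomp by blast
  have "\<forall>i. \<exists>ci hi. g i = mconst ci + L (hi :: var3 \<Rightarrow> 'k mpoly3)" using decomp by blast
  then obtain cc h where gi: "\<And>i. g i = mconst (cc i) + L (h i)" by metis
  have z: "Poly_Mapping.lookup w 0 = 0"
    using assms mdeg_0 unfolding homogeneous_def by (metis in_keys_iff zero_neq_numeral)
  have z1: "Poly_Mapping.lookup w (ev k) = 0" for k
    using assms mdeg_ev[of k] unfolding homogeneous_def by (metis in_keys_iff numeral_One numeral_eq_iff semiring_norm(85))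
  have c0: "c = 0" using z unfolding w by (simp add: lookup_add lookup_L0 lookup_mconst)
  have ck: "cc k = 0" for k
  proof -
    have "Poly_Mapping.lookup w (ev k) = cc k"
      unfolding w lookup_add lookup_Lev gi by (simp add: lookup_L0 lookup_mconst ev_nz)
    then show ?thesis using z1 by simp
  qed
  have "w = L (\<lambda>i. L (h i))"
    proof -
    have "g = (\<lambda>i. L (h i))" using gi ck by (simp add: mconst_def fun_eq_iff)
    then show ?thesis unfolding w c0 by (simp add: mconst_def)
  qed
  then show ?thesis unfolding M2_def by blast
qed

lemma bracket_M2:
  fixes B :: "'k::comm_ring_1 mpoly3 \<Rightarrow> 'k mpoly3 \<Rightarrow> 'k mpoly3"
  assumes pb: "poisson_bracket B" and q: "quadratic_poisson B"
  shows "M2 (B a b)"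
proof -
  have add1: "\<And>a b c. B (a + b) c = B a c + B b c"
    and add2: "\<And>a b c. B a (b + c) = B a b + B a c"
    and sm2: "\<And>s a b. B a (mconst s * b) = mconst s * B a b"
    and anti: "\<And>a b. B a b = - B b a"
    and leib: "\<And>a b c. B a (b * c) = B a b * c + b * B a c"
    using pb unfolding poisson_bracket_def by blast+
  have B1: "B x 1 = 0" for x
    using leib[of x 1 1] by simp
  have Bc2: "B x (mconst c) = 0" for x c
    using sm2[of x c 1] B1[of x] by simp
  have Bc1: "B (mconst c) x = 0" for x c
    using anti[of "mconst c" x] Bc2 by simp
  have inner: "M2 (B (mvar v) y)" for v y
  proof (induction y rule: mpoly_induct)
    case (add a b)
    then show ?case by (simp add: add2 M2_add)
  next
    case (const c)
    then show ?case by (simp add: Bc2 M2_zero)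
  next
    case (mulvar b w)
    have "M2 (B (mvar v) (mvar w))" using q hom2_M2 unfolding quadratic_poisson_def by blast
    then show ?case using mulvar by (simp add: leib M2_add M2_mult M2_mult2)
  qed
  show ?thesis
  proof (induction a arbitrary: b rule: mpoly_induct)
    case (add a c)
    then show ?case by (simp add: add1 M2_add)
  next
    case (const c)
    then show ?case by (simp add: Bc1 M2_zero)
  next
    case (mulvar a v)
    have "B (a * mvar v) b = - B b (a * mvar v)" by (rule anti)
    also have "\<dots> = B a b * mvar v + a * B (mvar v) b"
      using anti[of b a] anti[of b "mvar v"] by (simp add: leib)
    finally show ?case using mulvar inner by (simp add: M2_add M2_mult M2_mult2)
  qed
qed

theorem lemma2p2:
  fixes BP BQ :: "'k::field_char_0 mpoly3 \<Rightarrow> 'k mpoly3 \<Rightarrow> 'k mpoly3"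
  assumes "algebraically_closed TYPE('k)"
    and "poisson_bracket BP" and "quadratic_poisson BP"
    and "poisson_bracket BQ"
    and "\<exists>i j f d r. i \<noteq> j \<and> in_k_y1y2 f \<and> homogeneous d f \<and> r \<noteq> 0 \<and>
           BQ (mvar i) (mvar j) = f - mconst r * mvar V3 \<and>
           (\<forall>k l. k \<noteq> l \<and> {k, l} \<noteq> {i, j} \<longrightarrow>
              (\<exists>c m. BQ (mvar k) (mvar l) = mconst c * mmonomial m))"
  shows "\<not> (\<exists>\<phi>. poisson_iso BP BQ \<phi>)"
proof
  assume "\<exists>\<phi>. poisson_iso BP BQ \<phi>"
  then obtain \<phi> where iso: "poisson_iso BP BQ \<phi>" by blast
  have bij: "bij \<phi>" and padd: "\<And>a b. \<phi> (a + b) = \<phi> a + \<phi> b"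
    and psm: "\<And>s a. \<phi> (mconst s * a) = mconst s * \<phi> a"
    and pmul: "\<And>a b. \<phi> (a * b) = \<phi> a * \<phi> b"
    and p1: "\<phi> 1 = 1" and pbr: "\<And>a b. \<phi> (BP a b) = BQ (\<phi> a) (\<phi> b)"
    using iso unfolding poisson_iso_def by blast+
  define \<psi> where "\<psi> = inv \<phi>"
  have fpsi: "\<phi> (\<psi> u) = u" for u
    unfolding \<psi>_def using bij by (simp add: bij_is_surj surj_f_inv_f)
  have psif: "\<psi> (\<phi> a) = a" for a
    unfolding \<psi>_def using bij by (simp add: bij_is_inj inv_f_f)
  have psi_add: "\<psi> (u + v) = \<psi> u + \<psi> v" for u v
    by (metis fpsi psif padd)
  have psi_mul: "\<psi> (u * v) = \<psi> u * \<psi> v" for u v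
    by (metis fpsi psif pmul)
  define \<chi> where "\<chi> u = ev0 (\<psi> u)" for u
  define \<delta> where "\<delta> u = \<chi> (d3 u)" for u
  have chi_add: "\<chi> (u + v) = \<chi> u + \<chi> v" for u v
    by (simp add: \<chi>_def psi_add ev0_add)
  have chi_mul: "\<chi> (u * v) = \<chi> u * \<chi> v" for u v
    by (simp add: \<chi>_def psi_mul ev0_mult)
  have chi_phi: "\<chi> (\<phi> a) = ev0 a" for a
    by (simp add: \<chi>_def psif)
  have delta_add: "\<delta> (u + v) = \<delta> u + \<delta> v" for u v
    by (simp add: \<delta>_def d3_add chi_add)
  have delta_mul: "\<delta> (u * v) = \<chi> u * \<delta> v + \<chi> v * \<delta> u" for u v
    by (simp add: \<delta>_def d3_leibniz chi_add chi_mul)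
  have term0: "\<delta> (\<phi> (mvar i * (mvar j * X))) = 0" for i j X
    by (simp add: pmul delta_mul chi_mul chi_phi ev0_mvar)
  have M2_0: "\<delta> (\<phi> w) = 0" if "M2 w" for w
  proof -
    obtain h where "w = L (\<lambda>i. L (h i))" using \<open>M2 w\<close> unfolding M2_def by blast
    then show ?thesis by (simp add: L_def distrib_left padd delta_add term0)
  qed
  obtain i j f d r where r: "r \<noteq> 0" and f: "in_k_y1y2 f"
    and eq: "BQ (mvar i) (mvar j) = f - mconst r * mvar V3"
    using assms(5) by blast
  have "\<phi> (BP (\<psi> (mvar i)) (\<psi> (mvar j))) = f - mconst r * mvar V3"
    by (simp add: pbr fpsi eq)
  then have "\<delta> (f - mconst r * mvar V3) = 0"
    using M2_0 bracket_M2[OF assms(2,3)] by metis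
  moreover have "d3 (f - mconst r * mvar V3) = mconst (- r)"
  proof -
    have "d3 (mconst r * mvar V3) = mconst r" by (simp add: d3_mconst_mult d3_mvar3)
    then show ?thesis by (simp add: d3_diff d3_y1y2[OF f] mconst_def single_uminus)
  qed
  moreover have "\<psi> (mconst (- r)) = mconst (- r)"
    using psm[of "- r" 1] p1 psif by (metis mult_1_right)
  ultimately have "ev0 (mconst (- r)) = (0::'k)"
    by (simp add: \<delta>_def \<chi>_def)
  then show False using r by (simp add: ev0_mconst)
qed

end
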